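(* Let $(X,S)$ be an $S$-metric space, $r\ge0$, and let $\{x_n\}$ be an $r$-statistically convergent sequence in $X$. If $\{\xi_n\}$ is a sequence in $st\text{-}LIM^r x_n$ converging to $\xi\in X$, then $\xi\in st\text{-}LIM^r x_n$.
   Context: An $S$-metric on a nonempty set $X$ is a function $S:X^3\to[0,\infty)$ such that for all $x,y,z,a\in X$: $S(x,y,z)=0$ if and only if $x=y=z$, and $S(x,y,z)\le S(x,x,a)+S(y,y,a)+S(z,z,a)$. A sequence $\{\xi_n\}$ converges to $\xi$ if for every $\varepsilon>0$ there is $k$ with $S(\xi_n,\xi_n,\xi)<\varepsilon$ for all $n\ge k$. For $B\subset\mathbb N$ the natural density is $\delta(B)=\lim_{n\to\infty}\frac{|\{k\in B:k\le n\}|}{n}$ when the limit exists. For $r\ge0$, $\{x_n\}$ is $r$-statistically convergent to $x$ if for every $\varepsilon>0$, $\delta(\{n\in\mathbb N: S(x_n,x_n,x)\ge r+\varepsilon\})=0$; $st\text{-}LIM^r x_n$ denotes the set of all such $x\in X$, and $\{x_n\}$ is called $r$-statistically convergent if this set is nonempty. *)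

theory Defs
  imports "HOL-Analysis.Analysis"
begin

definition S_metric :: "'a set \<Rightarrow> ('a \<Rightarrow> 'a \<Rightarrow> 'a \<Rightarrow> real) \<Rightarrow> bool" where
  "S_metric X S \<longleftrightarrow> X \<noteq> {} \<and>
     (\<forall>x\<in>X. \<forall>y\<in>X. \<forall>z\<in>X. S x y z \<ge> 0) \<and>
     (\<forall>x\<in>X. \<forall>y\<in>X. \<forall>z\<in>X. S x y z = 0 \<longleftrightarrow> x = y \<and> y = z) \<and>
     (\<forall>x\<in>X. \<forall>y\<in>X. \<forall>z\<in>X. \<forall>a\<in>X. S x y z \<le> S x x a + S y y a + S z z a)"

definition S_converges :: "('a \<Rightarrow> 'a \<Rightarrow> 'a \<Rightarrow> real) \<Rightarrow> (nat \<Rightarrow> 'a) \<Rightarrow> 'a \<Rightarrow> bool" where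
  "S_converges S \<xi>s \<xi> \<longleftrightarrow> (\<forall>\<epsilon>>0. \<exists>k. \<forall>n\<ge>k. S (\<xi>s n) (\<xi>s n) \<xi> < \<epsilon>)"

definition has_natural_density :: "nat set \<Rightarrow> real \<Rightarrow> bool" where
  "has_natural_density B d \<longleftrightarrow>
     ((\<lambda>n. real (card {k\<in>B. 1 \<le> k \<and> k \<le> n}) / real n) \<longlongrightarrow> d) sequentially"

definition st_LIM :: "('a \<Rightarrow> 'a \<Rightarrow> 'a \<Rightarrow> real) \<Rightarrow> 'a set \<Rightarrow> real \<Rightarrow> (nat \<Rightarrow> 'a) \<Rightarrow> 'a set" where
  "st_LIM S X r xs = {x\<in>X. \<forall>\<epsilon>>0.
      has_natural_density {n. 1 \<le> n \<and> S (xs n) (xs n) x \<ge> r + \<epsilon>} 0}"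

definition r_stat_convergent :: "('a \<Rightarrow> 'a \<Rightarrow> 'a \<Rightarrow> real) \<Rightarrow> 'a set \<Rightarrow> real \<Rightarrow> (nat \<Rightarrow> 'a) \<Rightarrow> bool" where
  "r_stat_convergent S X r xs \<longleftrightarrow> st_LIM S X r xs \<noteq> {}"

end

theory Submission
  imports Defs
begin

lemma S_sym:
  assumes "S_metric X S" "x \<in> X" "y \<in> X"
  shows "S x x y = S y y x"
proof -
  have t: "\<forall>x\<in>X. \<forall>y\<in>X. \<forall>z\<in>X. \<forall>a\<in>X. S x y z \<le> S x x a + S y y a + S z z a"
   and z: "\<forall>x\<in>X. \<forall>y\<in>X. \<forall>z\<in>X. S x y z = 0 \<longleftrightarrow> x = y \<and> y = z"
    using assms(1) unfolding S_metric_def by auto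
  have "S x x x = 0" "S y y y = 0" using z assms by auto
  moreover have "S x x y \<le> S x x x + S x x x + S y y x" using t assms by blast
  moreover have "S y y x \<le> S y y y + S y y y + S x x y" using t assms by blast
  ultimately show ?thesis by linarith
qed

lemma density_subset:
  assumes "has_natural_density B 0" "A \<subseteq> B"
  shows "has_natural_density A 0"
  unfolding has_natural_density_def
proof (rule tendsto_sandwich[of "\<lambda>n. 0" _ _ "\<lambda>n. real (card {k\<in>B. 1 \<le> k \<and> k \<le> n}) / real n"])
  show "\<forall>\<^sub>F n in sequentially. 0 \<le> real (card {k \<in> A. 1 \<le> k \<and> k \<le> n}) / real n" by simp
  show "\<forall>\<^sub>F n in sequentially. real (card {k \<in> A. 1 \<le> k \<and> k \<le> n}) / real n
      \<le> real (card {k \<in> B. 1 \<le> k \<and> k \<le> n}) / real n"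
  proof (rule always_eventually, rule allI)
    fix n
    have "finite {k \<in> B. 1 \<le> k \<and> k \<le> n}" by (rule finite_subset[of _ "{..n}"]) auto
    moreover have "{k \<in> A. 1 \<le> k \<and> k \<le> n} \<subseteq> {k \<in> B. 1 \<le> k \<and> k \<le> n}" using assms(2) by auto
    ultimately have "card {k \<in> A. 1 \<le> k \<and> k \<le> n} \<le> card {k \<in> B. 1 \<le> k \<and> k \<le> n}"
      by (rule card_mono)
    then show "real (card {k \<in> A. 1 \<le> k \<and> k \<le> n}) / real n
      \<le> real (card {k \<in> B. 1 \<le> k \<and> k \<le> n}) / real n"
      by (simp add: divide_right_mono)
  qed
  show "(\<lambda>n. 0) \<longlonglongrightarrow> 0" by simp
  show "(\<lambda>n. real (card {k \<in> B. 1 \<le> k \<and> k \<le> n}) / real n) \<longlonglongrightarrow> 0"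
    using assms(1) unfolding has_natural_density_def .
qed

theorem theorem4p4:
  fixes X :: "'a set" and S :: "'a \<Rightarrow> 'a \<Rightarrow> 'a \<Rightarrow> real"
    and r :: real and xs :: "nat \<Rightarrow> 'a" and \<xi>s :: "nat \<Rightarrow> 'a" and \<xi> :: 'a
  assumes "S_metric X S"
    and "r \<ge> 0"
    and "\<forall>n. xs n \<in> X"
    and "r_stat_convergent S X r xs"
    and "\<forall>n. \<xi>s n \<in> st_LIM S X r xs"
    and "\<xi> \<in> X"
    and "S_converges S \<xi>s \<xi>"
  shows "\<xi> \<in> st_LIM S X r xs"
proof -
  have t: "\<forall>x\<in>X. \<forall>y\<in>X. \<forall>z\<in>X. \<forall>a\<in>X. S x y z \<le> S x x a + S y y a + S z z a"
    using assms(1) unfolding S_metric_def by auto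
  have "\<forall>\<epsilon>>0. has_natural_density {n. 1 \<le> n \<and> S (xs n) (xs n) \<xi> \<ge> r + \<epsilon>} 0"
  proof (intro allI impI)
    fix \<epsilon> :: real assume e: "\<epsilon> > 0"
    then obtain k where k: "S (\<xi>s k) (\<xi>s k) \<xi> < \<epsilon>/4"
      using assms(7) unfolding S_converges_def by (meson le_refl zero_less_divide_iff zero_less_numeral)
    have kX: "\<xi>s k \<in> X" and kd: "has_natural_density {n. 1 \<le> n \<and> S (xs n) (xs n) (\<xi>s k) \<ge> r + \<epsilon>/2} 0"
      using assms(5) e unfolding st_LIM_def by auto
    have sy: "S \<xi> \<xi> (\<xi>s k) = S (\<xi>s k) (\<xi>s k) \<xi>" using S_sym[OF assms(1) assms(6) kX] .
    show "has_natural_density {n. 1 \<le> n \<and> S (xs n) (xs n) \<xi> \<ge> r + \<epsilon>} 0"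
    proof (rule density_subset[OF kd], safe)
      fix n assume n: "1 \<le> n" "r + \<epsilon> \<le> S (xs n) (xs n) \<xi>"
      have "S (xs n) (xs n) \<xi> = S \<xi> \<xi> (xs n)" using S_sym[OF assms(1) _ assms(6)] assms(3) by blast
      also have "\<dots> \<le> S \<xi> \<xi> (\<xi>s k) + S \<xi> \<xi> (\<xi>s k) + S (xs n) (xs n) (\<xi>s k)"
        using t assms(3,6) kX by blast
      finally show "r + \<epsilon>/2 \<le> S (xs n) (xs n) (\<xi>s k)" using n sy k by linarith
    qed
  qed
  then show ?thesis unfolding st_LIM_def using assms(6) by auto
qed

end
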